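(* Let $(A,m)$ be a curved $A_\infty$-algebra over a field $\mathbf{F}$ and $m=\sum_{k\ge0}m_k\in\prod_kC^{k,2-k}(A,A)$. Then $m=[m,\mathbf{I}-\mathbf{E}]$; in particular $[m]=0\in\mathrm{HH}^2(A,A)$.
   Context: A curved $A_\infty$-algebra $(A,m)$ over $\mathbf{F}$ is a $\mathbf{Z}$-graded vector space $A=\bigoplus_kA^k$ with graded linear maps $m_n:A^{\otimes n}\to A$ for $n\ge0$ (with $m_0$ identified with $m_0(\mathbf{1})\in A^2$) of degree $2-n$, with $m_k=0$ for $k\gg1$, satisfying for every $n\ge0$: $\sum_{n=r+s+t}(-1)^{\delta(x_1,\dots,x_r)}m_{r+1+t}(x_1,\dots,x_r,m_s(x_{r+1},\dots,x_{r+s}),x_{r+s+1},\dots,x_n)=0$ ($r,t,s\ge0$), where $\delta(x_1,\dots,x_r)=\sum_{i=1}^r(|x_i|-1)$. Let $C^{n,k}(A,A)=\mathrm{Hom}^k(A^{\otimes n},A)=\prod_i\mathrm{Hom}((A^{\otimes n})^i,A^{i+k})$ for $n\ge0$ (with $A^{\otimes0}=\mathbf{F}$, so $C^{0,k}\cong A^k$). For $f\in C^{n,k}$, $g\in C^{m,l}$ the Gerstenhaber bracket is $[f,g]=\sum_{i=0}^{n-1}(-1)^{\delta_1}f(\mathbf{I}^{\otimes i}\otimes g\otimes\mathbf{I}^{\otimes n-i-1})-(-1)^{(n+k-1)(m+l-1)}\sum_{i=0}^{m-1}(-1)^{\delta_2}g(\mathbf{I}^{\otimes i}\otimes f\otimes\mathbf{I}^{\otimes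 m-i-1})$, with $\delta_1=(n-1)(m-1)+(n-1)l+i(m-1)$, $\delta_2=(m-1)(n-1)+(m-1)k+i(n-1)$, empty sums $=0$, tensor products of maps evaluated with the Koszul sign rule, extended bilinearly. $D=[m,-]$ and $\mathrm{HH}^*(A,A)=H^*(\prod_iC^{i,*-i}(A,A),D)$. $\mathbf{I}\in C^{1,0}$ is the identity, and the euler derivation element $\mathbf{E}\in C^{1,0}$ is $\mathbf{E}(\alpha)=\deg(\alpha)\,\alpha$ for homogeneous $\alpha$. *)

theory Defs
  imports Main "HOL.Vector_Spaces"
begin

(* A Z-graded vector space over a field 'f: an ambient F-vector space 'v (vector_space scale)
   together with subspaces G d (the homogeneous pieces A^d) such that every element is
   uniquely a finite sum of homogeneous components, i.e. 'v = (+)_d G d. *)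
definition is_decomp :: "(int \<Rightarrow> 'v set) \<Rightarrow> 'v::ab_group_add \<Rightarrow> (int \<Rightarrow> 'v) \<Rightarrow> bool" where
  "is_decomp G v c \<longleftrightarrow> finite {d. c d \<noteq> 0} \<and> (\<forall>d. c d \<in> G d) \<and> v = sum c {d. c d \<noteq> 0}"

definition graded_vs :: "('f::field \<Rightarrow> 'v::ab_group_add \<Rightarrow> 'v) \<Rightarrow> (int \<Rightarrow> 'v set) \<Rightarrow> bool" where
  "graded_vs scale G \<longleftrightarrow> vector_space scale \<and> (\<forall>d. module.subspace scale (G d))
     \<and> (\<forall>v. \<exists>!c. is_decomp G v c)"

definition proj :: "(int \<Rightarrow> 'v set) \<Rightarrow> int \<Rightarrow> 'v::ab_group_add \<Rightarrow> 'v" where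
  "proj G d v = (THE c. is_decomp G v c) d"

definition euler :: "('f::field \<Rightarrow> 'v::ab_group_add \<Rightarrow> 'v) \<Rightarrow> (int \<Rightarrow> 'v set) \<Rightarrow> 'v \<Rightarrow> 'v" where
  "euler scale G v = (\<Sum>d\<in>{d. proj G d v \<noteq> 0}. scale (of_int d) (proj G d v))"

definition sgnv :: "int \<Rightarrow> 'v::ab_group_add \<Rightarrow> 'v" where
  "sgnv z v = (if even z then v else - v)"

(* v |-> (-1)^(l*deg v) v, extended linearly (Koszul sign of passing a map of degree l) *)
definition ksign :: "(int \<Rightarrow> 'v set) \<Rightarrow> int \<Rightarrow> 'v::ab_group_add \<Rightarrow> 'v" where
  "ksign G l v = (\<Sum>d\<in>{d. proj G d v \<noteq> 0}. sgnv (l * d) (proj G d v))"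

(* n-ary maps A^{(x) n} -> A are represented as multilinear functions on lists of length n
   (value 0 on lists of other lengths). C^{n,k}(A,A) = Hom^k(A^{(x)n},A). *)
definition Cnk :: "('f::field \<Rightarrow> 'v::ab_group_add \<Rightarrow> 'v) \<Rightarrow> (int \<Rightarrow> 'v set) \<Rightarrow> nat \<Rightarrow> int
     \<Rightarrow> ('v list \<Rightarrow> 'v) set" where
  "Cnk scale G n k = {f.
     (\<forall>xs. length xs \<noteq> n \<longrightarrow> f xs = 0)
   \<and> (\<forall>xs j a b. length xs = n \<and> j < n \<longrightarrow> f (xs[j := a + b]) = f (xs[j := a]) + f (xs[j := b]))
   \<and> (\<forall>xs j a c. length xs = n \<and> j < n \<longrightarrow> f (xs[j := scale c a]) = scale c (f (xs[j := a])))
   \<and> (\<forall>xs ds. length xs = n \<and> length ds = n \<and> (\<forall>j<n. xs ! j \<in> G (ds ! j))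
        \<longrightarrow> f xs \<in> G (sum_list ds + k))}"

(* Gerstenhaber bracket [f,g] of f in C^{n,k}, g in C^{m,l}; the tensor product
   I^{(x)i} (x) g (x) I^{(x)...} is evaluated with the Koszul sign rule, i.e. the first
   i inputs x_j pick up (-1)^{l |x_j|}. *)
definition gbr :: "(int \<Rightarrow> 'v set) \<Rightarrow> int \<Rightarrow> int \<Rightarrow> nat \<Rightarrow> nat
     \<Rightarrow> ('v::ab_group_add list \<Rightarrow> 'v) \<Rightarrow> ('v list \<Rightarrow> 'v) \<Rightarrow> 'v list \<Rightarrow> 'v" where
  "gbr G k l n m f g xs =
    (if (n = 0 \<and> m = 0) \<or> length xs \<noteq> n + m - 1 then 0 else
      (\<Sum>i<n. sgnv ((int n - 1) * (int m - 1) + (int n - 1) * l + int i * (int m - 1))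
                 (f (map (ksign G l) (take i xs) @ [g (take m (drop i xs))] @ drop (i + m) xs)))
    - sgnv ((int n + k - 1) * (int m + l - 1))
      (\<Sum>i<m. sgnv ((int m - 1) * (int n - 1) + (int m - 1) * k + int i * (int n - 1))
                 (g (map (ksign G k) (take i xs) @ [f (take n (drop i xs))] @ drop (i + n) xs))))"

(* Hochschild cochains of total degree p: elements of prod_n C^{n,p-n}(A,A),
   represented as families F with F n the arity-n component. *)
definition cochain :: "('f::field \<Rightarrow> 'v::ab_group_add \<Rightarrow> 'v) \<Rightarrow> (int \<Rightarrow> 'v set) \<Rightarrow> int
     \<Rightarrow> (nat \<Rightarrow> 'v list \<Rightarrow> 'v) \<Rightarrow> bool" where
  "cochain scale G p F \<longleftrightarrow> (\<forall>n. F n \<in> Cnk scale G n (p - int n))"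

definition cbr :: "(int \<Rightarrow> 'v set) \<Rightarrow> int \<Rightarrow> int \<Rightarrow> (nat \<Rightarrow> 'v::ab_group_add list \<Rightarrow> 'v)
     \<Rightarrow> (nat \<Rightarrow> 'v list \<Rightarrow> 'v) \<Rightarrow> nat \<Rightarrow> 'v list \<Rightarrow> 'v" where
  "cbr G p q F H N xs =
     (\<Sum>n\<le>N + 1. gbr G (p - int n) (q - int (N + 1 - n)) n (N + 1 - n) (F n) (H (N + 1 - n)) xs)"

(* curved A-infinity structure m = (m_n)_n, m_n in C^{n,2-n}, m_n = 0 for n >> 1,
   satisfying the A-infinity relations (stated on homogeneous inputs x_j in A^{ds_j};
   by multilinearity this determines them on all inputs). *)
definition curved_Ainf :: "('f::field \<Rightarrow> 'v::ab_group_add \<Rightarrow> 'v) \<Rightarrow> (int \<Rightarrow> 'v set)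
     \<Rightarrow> (nat \<Rightarrow> 'v list \<Rightarrow> 'v) \<Rightarrow> bool" where
  "curved_Ainf scale G m \<longleftrightarrow>
     (\<forall>n. m n \<in> Cnk scale G n (2 - int n))
   \<and> finite {n. m n \<noteq> (\<lambda>_. 0)}
   \<and> (\<forall>n xs ds. length xs = n \<and> length ds = n \<and> (\<forall>j<n. xs ! j \<in> G (ds ! j)) \<longrightarrow>
        (\<Sum>r\<le>n. \<Sum>s\<le>n - r. sgnv (\<Sum>j<r. ds ! j - 1)
            (m (n - s + 1) (take r xs @ [m s (take s (drop r xs))] @ drop (r + s) xs))) = 0)"

definition IminusE :: "('f::field \<Rightarrow> 'v::ab_group_add \<Rightarrow> 'v) \<Rightarrow> (int \<Rightarrow> 'v set)
     \<Rightarrow> nat \<Rightarrow> 'v list \<Rightarrow> 'v" where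
  "IminusE scale G n xs = (if n = 1 \<and> length xs = 1 then hd xs - euler scale G (hd xs) else 0)"

end

theory Submission imports Defs begin

locale gvs =
  fixes scale :: "'f::field \<Rightarrow> 'v::ab_group_add \<Rightarrow> 'v" and G :: "int \<Rightarrow> 'v set"
  assumes gv: "graded_vs scale G"
begin

sublocale vector_space scale using gv by (simp add: graded_vs_def)

lemma subG: "subspace (G d)" using gv by (simp add: graded_vs_def)

lemma decomp: "is_decomp G v (\<lambda>d. proj G d v)"
proof -
  have "\<exists>!c. is_decomp G v c" using gv by (simp add: graded_vs_def)
  from theI'[OF this] show ?thesis unfolding proj_def by simp
qed

lemma proj_unique: "is_decomp G v c \<Longrightarrow> proj G d v = c d"
proof -
  assume a: "is_decomp G v c"
  have ex: "\<exists>!c. is_decomp G v c" using gv by (simp add: graded_vs_def)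
  have "(THE c. is_decomp G v c) = c" using ex a by (metis the1_equality)
  then show ?thesis unfolding proj_def by simp
qed

lemma sum_supp: "finite S \<Longrightarrow> {d. c d \<noteq> 0} \<subseteq> S \<Longrightarrow> sum c {d. c d \<noteq> 0} = sum c S"
  by (rule sum.mono_neutral_left) auto

lemma fin_supp: "finite {d. proj G d v \<noteq> 0}"
  using decomp[of v] by (simp add: is_decomp_def)

lemma proj_in: "proj G d v \<in> G d"
  using decomp[of v] by (simp add: is_decomp_def)

lemma sum_proj: "finite S \<Longrightarrow> {d. proj G d v \<noteq> 0} \<subseteq> S \<Longrightarrow> v = (\<Sum>d\<in>S. proj G d v)"
  using decomp[of v] sum_supp[of S "\<lambda>d. proj G d v"] by (simp add: is_decomp_def)

lemma euler_S: "finite S \<Longrightarrow> {d. proj G d v \<noteq> 0} \<subseteq> S \<Longrightarrow>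
   euler scale G v = (\<Sum>d\<in>S. scale (of_int d) (proj G d v))"
  unfolding euler_def by (rule sum.mono_neutral_left) auto

lemma ksign0: "ksign G 0 v = v"
  unfolding ksign_def sgnv_def using sum_proj[OF fin_supp order_refl, of v] by simp

lemma proj_add: "proj G d (u + v) = proj G d u + proj G d v"
proof -
  let ?S = "{d. proj G d u \<noteq> 0} \<union> {d. proj G d v \<noteq> 0}"
  have fS: "finite ?S" using fin_supp by simp
  have "is_decomp G (u + v) (\<lambda>d. proj G d u + proj G d v)"
    unfolding is_decomp_def
  proof (intro conjI allI)
    show "finite {d. proj G d u + proj G d v \<noteq> 0}"
      by (rule finite_subset[OF _ fS]) auto
    fix d show "proj G d u + proj G d v \<in> G d" using subspace_add[OF subG] proj_in by blast
  next
    have "sum (\<lambda>d. proj G d u + proj G d v) {d. proj G d u + proj G d v \<noteq> 0}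
        = sum (\<lambda>d. proj G d u + proj G d v) ?S"
      by (rule sum_supp[OF fS]) auto
    also have "\<dots> = (\<Sum>d\<in>?S. proj G d u) + (\<Sum>d\<in>?S. proj G d v)" by (simp add: sum.distrib)
    also have "\<dots> = u + v" using sum_proj[OF fS, of u] sum_proj[OF fS, of v] by auto
    finally show "u + v = sum (\<lambda>d. proj G d u + proj G d v) {d. proj G d u + proj G d v \<noteq> 0}" by simp
  qed
  then show ?thesis by (rule proj_unique)
qed

lemma proj_scale: "proj G d (scale a v) = scale a (proj G d v)"
proof -
  let ?S = "{d. proj G d v \<noteq> 0}"
  have fS: "finite ?S" using fin_supp by simp
  have "is_decomp G (scale a v) (\<lambda>d. scale a (proj G d v))"
    unfolding is_decomp_def
  proof (intro conjI allI)
    show "finite {d. scale a (proj G d v) \<noteq> 0}"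
      by (rule finite_subset[OF _ fS]) auto
    fix d show "scale a (proj G d v) \<in> G d" using subspace_scale[OF subG] proj_in by blast
  next
    have "sum (\<lambda>d. scale a (proj G d v)) {d. scale a (proj G d v) \<noteq> 0}
        = sum (\<lambda>d. scale a (proj G d v)) ?S"
      by (rule sum_supp[OF fS]) auto
    also have "\<dots> = scale a (\<Sum>d\<in>?S. proj G d v)" by (simp add: scale_sum_right)
    also have "\<dots> = scale a v" by (rule arg_cong[where f="scale a", OF sum_proj[OF fS order_refl, symmetric]])
    finally show "scale a v = sum (\<lambda>d. scale a (proj G d v)) {d. scale a (proj G d v) \<noteq> 0}" by simp
  qed
  then show ?thesis by (rule proj_unique)
qed

lemma euler_add: "euler scale G (u + v) = euler scale G u + euler scale G v"
proof -
  let ?S = "{d. proj G d u \<noteq> 0} \<union> {d. proj G d v \<noteq> 0}"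
  have fS: "finite ?S" using fin_supp by simp
  have "euler scale G (u+v) = (\<Sum>d\<in>?S. scale (of_int d) (proj G d (u+v)))"
    by (rule euler_S[OF fS]) (auto simp: proj_add)
  also have "\<dots> = (\<Sum>d\<in>?S. scale (of_int d) (proj G d u)) + (\<Sum>d\<in>?S. scale (of_int d) (proj G d v))"
    by (simp add: proj_add scale_right_distrib sum.distrib)
  also have "\<dots> = euler scale G u + euler scale G v"
    using euler_S[OF fS, of u] euler_S[OF fS, of v] by auto
  finally show ?thesis .
qed

lemma euler_scale: "euler scale G (scale a v) = scale a (euler scale G v)"
proof -
  let ?S = "{d. proj G d v \<noteq> 0}"
  have fS: "finite ?S" using fin_supp by simp
  have "euler scale G (scale a v) = (\<Sum>d\<in>?S. scale (of_int d) (proj G d (scale a v)))"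
    by (rule euler_S[OF fS]) (auto simp: proj_scale)
  also have "\<dots> = scale a (euler scale G v)"
    using euler_S[OF fS order_refl] by (simp add: proj_scale scale_sum_right mult.commute)
  finally show ?thesis .
qed

lemma euler_hom: assumes "x \<in> G d0" shows "euler scale G x = scale (of_int d0) x"
proof -
  have "is_decomp G x (\<lambda>d. if d = d0 then x else 0)"
    unfolding is_decomp_def using assms subspace_0[OF subG]
    by (auto intro: finite_subset[of _ "{d0}"] simp: sum_supp[of "{d0}"])
  then have p: "\<And>d. proj G d x = (if d = d0 then x else 0)" by (rule proj_unique)
  have "euler scale G x = (\<Sum>d\<in>{d0}. scale (of_int d) (proj G d x))"
    by (rule euler_S) (auto simp: p)
  then show ?thesis by (simp add: p)
qed

end

lemma add_zero:
  assumes add: "\<forall>xs j a b. length xs = N \<and> j < N \<longrightarrow> F (xs[j:=(a::'u::ab_group_add)+b]) = F (xs[j:=a]) + (F (xs[j:=b]) :: 'v::ab_group_add)"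
    and "length xs = N" "j < N"
  shows "F (xs[j:=0]) = 0"
  using add[rule_format, of xs j 0 0] assms(2,3) by simp

lemma add_sum:
  assumes add: "\<forall>xs j a b. length xs = N \<and> j < N \<longrightarrow> F (xs[j:=(a::'u::ab_group_add)+b]) = F (xs[j:=a]) + (F (xs[j:=b]) :: 'v::ab_group_add)"
    and "length xs = N" "j < N" and "finite S"
  shows "F (xs[j:=sum c S]) = (\<Sum>d\<in>S. F (xs[j:=c d]))"
  using assms(4)
proof (induction S rule: finite_induct)
  case empty then show ?case using add_zero[OF add assms(2,3)] by simp
next
  case (insert x S)
  then show ?case using add[rule_format, of xs j "c x" "sum c S"] assms(2,3) by simp
qed

context gvs begin

lemma multilin_zero:
  assumes add: "\<forall>xs j a b. length xs = N \<and> j < N \<longrightarrow> F (xs[j:=(a::'v)+b]) = F (xs[j:=a]) + (F (xs[j:=b]) :: 'w::ab_group_add)"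
    and hom: "\<And>xs ds. length xs = N \<Longrightarrow> length ds = N \<Longrightarrow> (\<forall>j<N. xs!j \<in> G (ds!j)) \<Longrightarrow> F xs = 0"
    and len: "length xs = N"
  shows "F xs = 0"
proof -
  have Q: "\<forall>xs. length xs = N \<and> (\<forall>j. k \<le> j \<and> j < N \<longrightarrow> (\<exists>d. xs!j \<in> G d)) \<longrightarrow> F xs = 0" for k
  proof (induction k)
    case 0
    show ?case
    proof (intro allI impI)
      fix xs assume a: "length xs = N \<and> (\<forall>j. 0 \<le> j \<and> j < N \<longrightarrow> (\<exists>d. xs!j \<in> G d))"
      let ?ds = "map (\<lambda>j. SOME d. xs!j \<in> G d) [0..<N]"
      show "F xs = 0"
      proof (rule hom)
        show "length xs = N" using a by simp
        show "length ?ds = N" by simp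
        show "\<forall>j<N. xs ! j \<in> G (?ds ! j)" using a by (auto intro: someI_ex)
      qed
    qed
  next
    case (Suc k)
    show ?case
    proof (intro allI impI)
      fix xs assume a: "length xs = N \<and> (\<forall>j. Suc k \<le> j \<and> j < N \<longrightarrow> (\<exists>d. xs!j \<in> G d))"
      show "F xs = 0"
      proof (cases "k < N")
        case False
        then show ?thesis using Suc.IH a by auto
      next
        case True
        let ?S = "{d. proj G d (xs!k) \<noteq> 0}"
        have "F xs = F (xs[k := (\<Sum>d\<in>?S. proj G d (xs!k))])"
          using sum_proj[OF fin_supp order_refl, of "xs!k"] by simp
        also have "\<dots> = (\<Sum>d\<in>?S. F (xs[k := proj G d (xs!k)]))"
          by (rule add_sum[OF add _ True fin_supp]) (use a in simp)
        also have "\<dots> = 0"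
        proof (rule sum.neutral, intro ballI)
          fix d
          show "F (xs[k := proj G d (xs!k)]) = 0"
            using Suc.IH a proj_in True
            by (smt (verit) Suc_leI le_neq_implies_less length_list_update nth_list_update)
        qed
        finally show ?thesis .
      qed
    qed
  qed
  show ?thesis using Q[of N] len by auto
qed

end

context gvs begin

lemma main_id:
  assumes M: "M \<in> Cnk scale G N (2 - int N)" and len: "length xs = N"
  shows "(\<Sum>i<N. M (xs[i := xs!i - euler scale G (xs!i)])) - (M xs - euler scale G (M xs)) = M xs"
proof -
  have Madd: "\<And>xs j a b. length xs = N \<Longrightarrow> j < N \<Longrightarrow> M (xs[j := a + b]) = M (xs[j := a]) + M (xs[j := b])"
    using M unfolding Cnk_def by blast
  have Msc: "\<And>xs j a c. length xs = N \<Longrightarrow> j < N \<Longrightarrow> M (xs[j := scale c a]) = scale c (M (xs[j := a]))"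
    using M unfolding Cnk_def by blast
  have Mgr: "\<And>xs ds. length xs = N \<Longrightarrow> length ds = N \<Longrightarrow> (\<forall>j<N. xs ! j \<in> G (ds ! j)) \<Longrightarrow> M xs \<in> G (sum_list ds + (2 - int N))"
    using M unfolding Cnk_def by blast
  define F where "F xs = (\<Sum>i<N. M (xs[i := xs!i - euler scale G (xs!i)])) - (M xs - euler scale G (M xs)) - M xs" for xs
  have tadd: "M ((xs[j:=a+b])[i := (xs[j:=a+b])!i - euler scale G ((xs[j:=a+b])!i)])
      = M ((xs[j:=a])[i := (xs[j:=a])!i - euler scale G ((xs[j:=a])!i)])
      + M ((xs[j:=b])[i := (xs[j:=b])!i - euler scale G ((xs[j:=b])!i)])"
    if "length xs = N" "j < N" "i < N" for xs j i a b
  proof (cases "i = j")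
    case True
    have e: "(a + b) - euler scale G (a + b) = (a - euler scale G a) + (b - euler scale G b)"
      by (simp add: euler_add)
    have "M (xs[j := (a + b) - euler scale G (a + b)]) = M (xs[j := a - euler scale G a]) + M (xs[j := b - euler scale G b])"
      unfolding e by (rule Madd[OF that(1,2)])
    then show ?thesis using True that by simp
  next
    case False
    let ?y = "xs!i - euler scale G (xs!i)"
    have e: "\<And>c. (xs[j:=c])[i := (xs[j:=c])!i - euler scale G ((xs[j:=c])!i)] = (xs[i:=?y])[j:=c]"
      using False by (simp add: list_update_swap)
    show ?thesis unfolding e using Madd[of "xs[i:=?y]" j a b] that by simp
  qed
  have Fadd: "\<forall>xs j a b. length xs = N \<and> j < N \<longrightarrow> F (xs[j:=(a::'v)+b]) = F (xs[j:=a]) + F (xs[j:=b])"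
  proof (intro allI impI)
    fix xs :: "'v list" and j and a b :: 'v assume a: "length xs = N \<and> j < N"
    have s: "(\<Sum>i<N. M ((xs[j:=a+b])[i := (xs[j:=a+b])!i - euler scale G ((xs[j:=a+b])!i)]))
      = (\<Sum>i<N. M ((xs[j:=a])[i := (xs[j:=a])!i - euler scale G ((xs[j:=a])!i)]))
      + (\<Sum>i<N. M ((xs[j:=b])[i := (xs[j:=b])!i - euler scale G ((xs[j:=b])!i)]))"
      using tadd a by (simp add: sum.distrib)
    show "F (xs[j:=a+b]) = F (xs[j:=a]) + F (xs[j:=b])"
      unfolding F_def s using Madd[of xs j a b] a by (simp add: euler_add algebra_simps)
  qed
  have Fhom: "F xs = 0" if l: "length xs = N" "length ds = N" and h: "\<forall>j<N. xs!j \<in> G (ds!j)" for xs ds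
  proof -
    have t: "M (xs[i := xs!i - euler scale G (xs!i)]) = scale (1 - of_int (ds!i)) (M xs)" if "i < N" for i
    proof -
      have "xs!i - euler scale G (xs!i) = scale (1 - of_int (ds!i)) (xs!i)"
        using euler_hom[of "xs!i" "ds!i"] h that by (simp add: scale_left_diff_distrib)
      then show ?thesis using Msc[of xs i "1 - of_int (ds!i)" "xs!i"] l that by simp
    qed
    have em: "euler scale G (M xs) = scale (of_int (sum_list ds + (2 - int N))) (M xs)"
      by (rule euler_hom[OF Mgr[OF l h]])
    have sd: "(\<Sum>i<N. (1 - of_int (ds!i) :: 'f)) = of_nat N - of_int (sum_list ds)"
      using l by (simp add: sum_list_sum_nth sum_subtractf lessThan_atLeast0)
    have "F xs = scale (\<Sum>i<N. (1 - of_int (ds!i))) (M xs) - (M xs - scale (of_int (sum_list ds + (2 - int N))) (M xs)) - M xs"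
      unfolding F_def em using t by (simp add: scale_sum_left)
    also have "\<dots> = scale ((of_nat N - of_int (sum_list ds)) - 1 + of_int (sum_list ds + (2 - int N)) - 1) (M xs)"
      unfolding sd scale_left_diff_distrib scale_left_distrib scale_one by (simp add: algebra_simps)
    also have "\<dots> = 0" by (simp add: algebra_simps)
    finally show ?thesis .
  qed
  have "F xs = 0" by (rule multilin_zero[OF Fadd Fhom len])
  then show ?thesis unfolding F_def by simp
qed

end

lemma zero_slot:
  assumes f: "f \<in> Cnk scale G n k"
  shows "f (as @ [0] @ bs) = (0::'v::ab_group_add)"
proof (cases "length (as @ [0] @ bs) = n")
  case False then show ?thesis using f unfolding Cnk_def by blast
next
  case True
  let ?ys = "as @ [0] @ bs" and ?j = "length as"
  have j: "?j < n" using True by simp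
  have "f (?ys[?j := 0 + 0]) = f (?ys[?j := 0]) + f (?ys[?j := 0])"
    using f True j unfolding Cnk_def by blast
  moreover have "?ys[?j := 0] = ?ys" by simp
  ultimately show ?thesis by simp
qed

lemma gbr_zero:
  assumes f: "f \<in> Cnk scale G n k"
  shows "gbr G k l n mm f (\<lambda>_. 0) xs = (0::'v::ab_group_add)"
proof -
  have z: "\<And>z. sgnv z (0::'v) = 0" by (simp add: sgnv_def)
  show ?thesis unfolding gbr_def using zero_slot[OF f] by (simp add: z)
qed

context gvs begin

lemma IminusE_zero: "k \<noteq> 1 \<Longrightarrow> IminusE scale G k = (\<lambda>_. 0)"
  by (rule ext) (simp add: IminusE_def)

lemma cochainI: "cochain scale G 1 (IminusE scale G)"
  unfolding cochain_def
proof
  fix n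
  show "IminusE scale G n \<in> Cnk scale G n (1 - int n)"
  proof (cases "n = 1")
    case False
    then show ?thesis unfolding IminusE_zero[OF False] Cnk_def using subspace_0[OF subG] by simp
  next
    case True
    have hom: "x - euler scale G x \<in> G d" if "x \<in> G d" for x d
      using euler_hom[OF that] that subspace_diff[OF subG] subspace_scale[OF subG] by metis
    show ?thesis unfolding True Cnk_def
    proof (intro CollectI conjI allI impI)
      fix xs :: "'v list" assume "length xs \<noteq> 1" then show "IminusE scale G 1 xs = 0"
        by (simp add: IminusE_def)
    next
      fix xs :: "'v list" and j :: nat and a b assume "length xs = 1 \<and> j < 1"
      then show "IminusE scale G 1 (xs[j := a + b]) = IminusE scale G 1 (xs[j := a]) + IminusE scale G 1 (xs[j := b])"
        by (cases xs) (auto simp: IminusE_def euler_add)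
    next
      fix xs :: "'v list" and j :: nat and a c assume "length xs = 1 \<and> j < 1"
      then show "IminusE scale G 1 (xs[j := scale c a]) = scale c (IminusE scale G 1 (xs[j := a]))"
        by (cases xs) (auto simp: IminusE_def euler_scale scale_right_diff_distrib)
    next
      fix xs :: "'v list" and ds assume a: "length xs = 1 \<and> length ds = 1 \<and> (\<forall>j<1. xs ! j \<in> G (ds ! j))"
      then obtain x d where "xs = [x]" "ds = [d]" by (metis length_0_conv length_Suc_conv One_nat_def)
      then show "IminusE scale G 1 xs \<in> G (sum_list ds + (1 - int 1))"
        using a hom by (simp add: IminusE_def)
    qed
  qed
qed

lemma cbr_eq:
  assumes Ai: "curved_Ainf scale G m"
  shows "cbr G 2 1 m (IminusE scale G) N xs = m N xs"
proof -
  have mC: "\<And>n. m n \<in> Cnk scale G n (2 - int n)" using Ai unfolding curved_Ainf_def by blast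
  let ?T = "\<lambda>n. gbr G (2 - int n) (1 - int (N + 1 - n)) n (N + 1 - n) (m n) (IminusE scale G (N + 1 - n)) xs"
  have "cbr G 2 1 m (IminusE scale G) N xs = (\<Sum>n\<le>N+1. ?T n)" unfolding cbr_def by simp
  also have "\<dots> = ?T N + (\<Sum>n\<in>{..N+1} - {N}. ?T n)"
    by (rule sum.remove) auto
  also have "(\<Sum>n\<in>{..N+1} - {N}. ?T n) = 0"
  proof (rule sum.neutral, intro ballI)
    fix n assume "n \<in> {..N+1} - {N}"
    then have ne: "N + 1 - n \<noteq> 1" by auto
    show "?T n = 0" unfolding IminusE_zero[OF ne] by (rule gbr_zero[OF mC])
  qed
  also have "?T N = m N xs"
  proof (cases "length xs = N")
    case False
    then have "m N xs = 0" using mC[of N] unfolding Cnk_def by blast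
    then show ?thesis using False by (simp add: gbr_def)
  next
    case True
    have t1: "take 1 (drop i xs) = [xs!i]" if "i < N" for i
      using that True by (metis Cons_nth_drop_Suc One_nat_def take0 take_Suc_Cons)
    have s1: "(\<Sum>i<N. sgnv ((int N - 1) * (int 1 - 1) + (int N - 1) * 0 + int i * (int 1 - 1))
                 (m N (map (ksign G 0) (take i xs) @ [IminusE scale G 1 (take 1 (drop i xs))] @ drop (i + 1) xs)))
         = (\<Sum>i<N. m N (xs[i := xs!i - euler scale G (xs!i)]))"
    proof (rule sum.cong[OF refl])
      fix i assume "i \<in> {..<N}"
      then have i: "i < N" by simp
      have "map (ksign G 0) (take i xs) = take i xs" by (rule map_idI) (rule ksign0)
      then show "sgnv ((int N - 1) * (int 1 - 1) + (int N - 1) * 0 + int i * (int 1 - 1))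
                 (m N (map (ksign G 0) (take i xs) @ [IminusE scale G 1 (take 1 (drop i xs))] @ drop (i + 1) xs))
            = m N (xs[i := xs!i - euler scale G (xs!i)])"
        using i True t1[OF i] by (simp add: sgnv_def IminusE_def upd_conv_take_nth_drop)
    qed
    have s2: "sgnv ((int N + (2 - int N) - 1) * (int 1 + 0 - 1))
      (\<Sum>i<1. sgnv ((int 1 - 1) * (int N - 1) + (int 1 - 1) * (2 - int N) + int i * (int N - 1))
                 (IminusE scale G 1 (map (ksign G (2 - int N)) (take i xs) @ [m N (take N (drop i xs))] @ drop (i + N) xs)))
       = m N xs - euler scale G (m N xs)"
      using True by (simp add: sgnv_def IminusE_def)
    have "?T N = gbr G (2 - int N) 0 N 1 (m N) (IminusE scale G 1) xs" by simp
    also have "\<dots> = (\<Sum>i<N. m N (xs[i := xs!i - euler scale G (xs!i)])) - (m N xs - euler scale G (m N xs))"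
      unfolding gbr_def using True s1 s2 by simp
    also have "\<dots> = m N xs" by (rule main_id[OF mC True])
    finally show ?thesis .
  qed
  finally show ?thesis by simp
qed

end

theorem theorem3p4:
  fixes scale :: "'f::field \<Rightarrow> 'v::ab_group_add \<Rightarrow> 'v"
    and G :: "int \<Rightarrow> 'v set"
    and m :: "nat \<Rightarrow> 'v list \<Rightarrow> 'v"
  assumes "graded_vs scale G"
    and "curved_Ainf scale G m"
  shows "m = cbr G 2 1 m (IminusE scale G)
         \<and> (\<exists>h. cochain scale G 1 h \<and> cbr G 2 1 m h = m)"
proof -
  interpret gvs scale G by standard (rule assms(1))
  have e: "cbr G 2 1 m (IminusE scale G) = m"
    by (intro ext) (rule cbr_eq[OF assms(2)])
  show ?thesis using e cochainI by auto
qed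

end
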